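(* For every equivalence class $[i]\in I/\sim$, the subspace $V_{[i]}=\bigoplus_{i'\in[i]}\mathbb F v_{i'}$ is a $k$-submodule of $\mathbb V$.
   Context: Fix integers $n\ge 2$ and $1\le k\le n$ and an arbitrary field $\mathbb F$; $S_n$ denotes the symmetric group on $n$ letters. A $k$-module over a linear space $\mathbb W$ is an $\mathbb F$-vector space $\mathbb V$ (the dimensions of $\mathbb V$ and $\mathbb W$ are arbitrary, possibly infinite) together with, for every $\sigma\in S_n$, an $n$-linear map $\mathbb V^k\times\mathbb W^{n-k}\to\mathbb V$, $(x_1,\dots,x_k,y_{k+1},\dots,y_n)\mapsto[x_1,\dots,x_k,y_{k+1},\dots,y_n]_\sigma$ (interpreted as an $n$-ary bracket in which the $l$-th argument is placed in position $\sigma(l)$). A $k$-submodule of $\mathbb V$ is a linear subspace $U$ such that $[u,x_2,\dots,x_k,y_{k+1},\dots,y_n]_\sigma\in U$ for all $\sigma\in S_n$, $u\in U$, $x_l\in\mathbb V$, $y_l\in\mathbb W$. Fix a basis $\mathfrak B'=\{w_j\}_{j\in J}$ of $\mathbb W$. A basis $\mathfrak B=\{v_i\}_{i\in I}$ of $\mathbb V$ is multiplicative (with respect to $\mathfrak B'$) if for all $\sigma\in S_n$, $i_1,\dots,i_k\in I$, $j_{k+1},\dots,j_n\in J$, the element $[v_{i_1},\dots,v_{i_k},w_{j_{k+1}},\dots,w_{j_n}]_\sigma$ lies in $\mathbb F v_r$ for some $r\in I$. Throughout, $\mathbb V$ is a $k$-module over $\mathbb W$ with a multiplicative basis $\mathfrak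 B=\{v_i\}_{i\in I}$ with respect to $\mathfrak B'=\{w_j\}_{j\in J}$. Index machinery: let $\overline I=\{\overline i:i\in I\}$ and $\overline J=\{\overline j:j\in J\}$ be sets of new symbols disjoint from $I$ and $J$, with the convention $\overline{\overline x}=x$; for a tuple $X=(x_2,\dots,x_k)$ put $\overline X=(\overline x_2,\dots,\overline x_k)$, similarly for $Y$. For $\sigma\in S_n$, $i_1,\dots,i_k\in I$, $j_{k+1},\dots,j_n\in J$, let $a_\sigma(i_1,\dots,i_k,j_{k+1},\dots,j_n)=\emptyset$ if $[v_{i_1},\dots,v_{i_k},w_{j_{k+1}},\dots,w_{j_n}]_\sigma=0$ and $=\{r\}$ if this bracket is a nonzero element of $\mathbb F v_r$. For $i,i_2,\dots,i_k\in I$, $j_{k+1},\dots,j_n\in J$ let $b_\sigma(i,\overline i_2,\dots,\overline i_k,\overline j_{k+1},\dots,\overline j_n)=\{i'\in I: a_\sigma(i',i_2,\dots,i_k,j_{k+1},\dots,j_n)=\{i\}\}$. For $i\in I$, $X=(x_2,\dots,x_k)\in(I\,\dot\cup\,\overline I)^{k-1}$, $Y=(y_{k+1},\dots,y_n)\in(J\,\dot\cup\,\overline J)^{n-k}$ define $\mu(i,X,Y)\subseteq I$ by: $\mu(i,X,Y)=\bigcup_{\sigma\in S_n}a_\sigma(i,X,Y)$ if all $x_l\in I$ and all $y_l\in J$; $\mu(i,X,Y)=\bigcup_{\sigma\in S_n}b_\sigma(i,X,Y)$ if all $x_l\in\overline I$ and all $y_l\in\overline J$; and $\mu(i,X,Y)=\emptyset$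 otherwise. For $\mathfrak A\subseteq I$ set $\phi(\mathfrak A,X,Y)=\bigcup_{i\in\mathfrak A}\mu(i,X,Y)$. Connections: for distinct $i,i'\in I$, a connection from $i$ to $i'$ is a finite sequence $(X_1,Y_1,\dots,X_t,Y_t)$, $t\ge1$, with $X_m\in(I\,\dot\cup\,\overline I)^{k-1}$ and $Y_m\in(J\,\dot\cup\,\overline J)^{n-k}$, such that, setting $\mathfrak A_0=\{i\}$ and $\mathfrak A_m=\phi(\mathfrak A_{m-1},X_m,Y_m)$, one has $\mathfrak A_m\neq\emptyset$ for $1\le m\le t-1$ and $i'\in\mathfrak A_t$. We say $i$ is connected to $i'$ if such a connection exists; by convention every $i\in I$ is connected to itself. This relation, written $i\sim i'$, is an equivalence relation on $I$; $[i]$ denotes the class of $i$ and $I/\sim$ the set of classes. *)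

theory Defs
  imports Main "HOL.Vector_Spaces" "HOL-Combinatorics.Permutations"
begin

text \<open>The family of brackets is br :: (nat => nat) => 'v list => 'w list => 'v:
  br sigma [x_1,...,x_k] [y_(k+1),...,y_n] = [x_1,...,x_k,y_(k+1),...,y_n]_sigma.
  Barred symbols: for X in (I disjoint-union I-bar)^(k-1) we use lists of 'i + 'i,
  Inl i = i, Inr i = bar i (and similarly for Y with 'j + 'j).\<close>

definition S_n :: "nat \<Rightarrow> (nat \<Rightarrow> nat) set" where
  "S_n n = {\<sigma>. \<sigma> permutes {1..n}}"

definition is_k_module ::
  "('f::field \<Rightarrow> 'v::ab_group_add \<Rightarrow> 'v) \<Rightarrow> ('f \<Rightarrow> 'w::ab_group_add \<Rightarrow> 'w) \<Rightarrow> nat \<Rightarrow> nat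
   \<Rightarrow> ((nat \<Rightarrow> nat) \<Rightarrow> 'v list \<Rightarrow> 'w list \<Rightarrow> 'v) \<Rightarrow> bool" where
  "is_k_module scaleV scaleW n k br \<longleftrightarrow>
     vector_space scaleV \<and> vector_space scaleW \<and> 1 \<le> k \<and> k \<le> n \<and>
     (\<forall>\<sigma>\<in>S_n n. \<forall>xs ys. length xs = k \<and> length ys = n - k \<longrightarrow>
        (\<forall>p < k. Vector_Spaces.linear scaleV scaleV (\<lambda>x. br \<sigma> (xs[p := x]) ys)) \<and>
        (\<forall>p < n - k. Vector_Spaces.linear scaleW scaleV (\<lambda>y. br \<sigma> xs (ys[p := y]))))"

definition is_k_submodule ::
  "('f::field \<Rightarrow> 'v::ab_group_add \<Rightarrow> 'v) \<Rightarrow> nat \<Rightarrow> nat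
   \<Rightarrow> ((nat \<Rightarrow> nat) \<Rightarrow> 'v list \<Rightarrow> 'w list \<Rightarrow> 'v) \<Rightarrow> 'v set \<Rightarrow> bool" where
  "is_k_submodule scaleV n k br U \<longleftrightarrow>
     module.subspace scaleV U \<and>
     (\<forall>\<sigma>\<in>S_n n. \<forall>u\<in>U. \<forall>xs ys. length xs = k - 1 \<and> length ys = n - k \<longrightarrow>
        br \<sigma> (u # xs) ys \<in> U)"

definition is_basis_on :: "('f::field \<Rightarrow> 'v::ab_group_add \<Rightarrow> 'v) \<Rightarrow> 'i set \<Rightarrow> ('i \<Rightarrow> 'v) \<Rightarrow> bool" where
  "is_basis_on scale I v \<longleftrightarrow>
     inj_on v I \<and> \<not> module.dependent scale (v ` I) \<and> module.span scale (v ` I) = UNIV"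

definition multiplicative_basis ::
  "('f::field \<Rightarrow> 'v::ab_group_add \<Rightarrow> 'v) \<Rightarrow> nat \<Rightarrow> nat
   \<Rightarrow> ((nat \<Rightarrow> nat) \<Rightarrow> 'v list \<Rightarrow> 'w list \<Rightarrow> 'v)
   \<Rightarrow> 'i set \<Rightarrow> ('i \<Rightarrow> 'v) \<Rightarrow> 'j set \<Rightarrow> ('j \<Rightarrow> 'w) \<Rightarrow> bool" where
  "multiplicative_basis scaleV n k br I v J w \<longleftrightarrow>
     (\<forall>\<sigma>\<in>S_n n. \<forall>is js. length is = k \<and> length js = n - k \<and> set is \<subseteq> I \<and> set js \<subseteq> J \<longrightarrow>
        (\<exists>r\<in>I. \<exists>c. br \<sigma> (map v is) (map w js) = scaleV c (v r)))"

definition a_sig ::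
  "('f::field \<Rightarrow> 'v::ab_group_add \<Rightarrow> 'v) \<Rightarrow> ((nat \<Rightarrow> nat) \<Rightarrow> 'v list \<Rightarrow> 'w list \<Rightarrow> 'v)
   \<Rightarrow> 'i set \<Rightarrow> ('i \<Rightarrow> 'v) \<Rightarrow> ('j \<Rightarrow> 'w) \<Rightarrow> (nat \<Rightarrow> nat) \<Rightarrow> 'i list \<Rightarrow> 'j list \<Rightarrow> 'i set" where
  "a_sig scaleV br I v w \<sigma> is js =
     {r\<in>I. br \<sigma> (map v is) (map w js) \<noteq> 0 \<and> (\<exists>c. br \<sigma> (map v is) (map w js) = scaleV c (v r))}"

definition b_sig ::
  "('f::field \<Rightarrow> 'v::ab_group_add \<Rightarrow> 'v) \<Rightarrow> ((nat \<Rightarrow> nat) \<Rightarrow> 'v list \<Rightarrow> 'w list \<Rightarrow> 'v)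
   \<Rightarrow> 'i set \<Rightarrow> ('i \<Rightarrow> 'v) \<Rightarrow> ('j \<Rightarrow> 'w) \<Rightarrow> (nat \<Rightarrow> nat) \<Rightarrow> 'i \<Rightarrow> 'i list \<Rightarrow> 'j list \<Rightarrow> 'i set" where
  "b_sig scaleV br I v w \<sigma> i is js = {i'\<in>I. a_sig scaleV br I v w \<sigma> (i' # is) js = {i}}"

definition mu ::
  "('f::field \<Rightarrow> 'v::ab_group_add \<Rightarrow> 'v) \<Rightarrow> nat \<Rightarrow> ((nat \<Rightarrow> nat) \<Rightarrow> 'v list \<Rightarrow> 'w list \<Rightarrow> 'v)
   \<Rightarrow> 'i set \<Rightarrow> ('i \<Rightarrow> 'v) \<Rightarrow> ('j \<Rightarrow> 'w) \<Rightarrow> 'i \<Rightarrow> ('i + 'i) list \<Rightarrow> ('j + 'j) list \<Rightarrow> 'i set" where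
  "mu scaleV n br I v w i X Y =
     (if (\<forall>x\<in>set X. isl x) \<and> (\<forall>y\<in>set Y. isl y)
      then (\<Union>\<sigma>\<in>S_n n. a_sig scaleV br I v w \<sigma> (i # map projl X) (map projl Y))
      else if (\<forall>x\<in>set X. \<not> isl x) \<and> (\<forall>y\<in>set Y. \<not> isl y)
      then (\<Union>\<sigma>\<in>S_n n. b_sig scaleV br I v w \<sigma> i (map projr X) (map projr Y))
      else {})"

definition phi ::
  "('f::field \<Rightarrow> 'v::ab_group_add \<Rightarrow> 'v) \<Rightarrow> nat \<Rightarrow> ((nat \<Rightarrow> nat) \<Rightarrow> 'v list \<Rightarrow> 'w list \<Rightarrow> 'v)
   \<Rightarrow> 'i set \<Rightarrow> ('i \<Rightarrow> 'v) \<Rightarrow> ('j \<Rightarrow> 'w) \<Rightarrow> 'i set \<Rightarrow> ('i + 'i) list \<Rightarrow> ('j + 'j) list \<Rightarrow> 'i set" where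
  "phi scaleV n br I v w A X Y = (\<Union>i\<in>A. mu scaleV n br I v w i X Y)"

text \<open>A_m for a sequence of steps (X_1,Y_1),...,(X_t,Y_t) (stored 0-based in a list).\<close>
fun A_seq ::
  "('f::field \<Rightarrow> 'v::ab_group_add \<Rightarrow> 'v) \<Rightarrow> nat \<Rightarrow> ((nat \<Rightarrow> nat) \<Rightarrow> 'v list \<Rightarrow> 'w list \<Rightarrow> 'v)
   \<Rightarrow> 'i set \<Rightarrow> ('i \<Rightarrow> 'v) \<Rightarrow> ('j \<Rightarrow> 'w) \<Rightarrow> 'i set \<Rightarrow> (('i + 'i) list \<times> ('j + 'j) list) list
   \<Rightarrow> nat \<Rightarrow> 'i set" where
  "A_seq scaleV n br I v w A0 steps 0 = A0"
| "A_seq scaleV n br I v w A0 steps (Suc m) =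
     phi scaleV n br I v w (A_seq scaleV n br I v w A0 steps m) (fst (steps ! m)) (snd (steps ! m))"

definition is_connection ::
  "('f::field \<Rightarrow> 'v::ab_group_add \<Rightarrow> 'v) \<Rightarrow> nat \<Rightarrow> nat \<Rightarrow> ((nat \<Rightarrow> nat) \<Rightarrow> 'v list \<Rightarrow> 'w list \<Rightarrow> 'v)
   \<Rightarrow> 'i set \<Rightarrow> ('i \<Rightarrow> 'v) \<Rightarrow> 'j set \<Rightarrow> ('j \<Rightarrow> 'w) \<Rightarrow> 'i \<Rightarrow> 'i
   \<Rightarrow> (('i + 'i) list \<times> ('j + 'j) list) list \<Rightarrow> bool" where
  "is_connection scaleV n k br I v J w i i' steps \<longleftrightarrow>
     steps \<noteq> [] \<and>
     (\<forall>(X, Y)\<in>set steps. length X = k - 1 \<and> length Y = n - k \<and>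
        set X \<subseteq> Inl ` I \<union> Inr ` I \<and> set Y \<subseteq> Inl ` J \<union> Inr ` J) \<and>
     (\<forall>m. 1 \<le> m \<and> m \<le> length steps - 1 \<longrightarrow> A_seq scaleV n br I v w {i} steps m \<noteq> {}) \<and>
     i' \<in> A_seq scaleV n br I v w {i} steps (length steps)"

definition connected ::
  "('f::field \<Rightarrow> 'v::ab_group_add \<Rightarrow> 'v) \<Rightarrow> nat \<Rightarrow> nat \<Rightarrow> ((nat \<Rightarrow> nat) \<Rightarrow> 'v list \<Rightarrow> 'w list \<Rightarrow> 'v)
   \<Rightarrow> 'i set \<Rightarrow> ('i \<Rightarrow> 'v) \<Rightarrow> 'j set \<Rightarrow> ('j \<Rightarrow> 'w) \<Rightarrow> 'i \<Rightarrow> 'i \<Rightarrow> bool" where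
  "connected scaleV n k br I v J w i i' \<longleftrightarrow>
     i \<in> I \<and> i' \<in> I \<and>
     (i = i' \<or> (i \<noteq> i' \<and> (\<exists>steps. is_connection scaleV n k br I v J w i i' steps)))"

definition conn_rel ::
  "('f::field \<Rightarrow> 'v::ab_group_add \<Rightarrow> 'v) \<Rightarrow> nat \<Rightarrow> nat \<Rightarrow> ((nat \<Rightarrow> nat) \<Rightarrow> 'v list \<Rightarrow> 'w list \<Rightarrow> 'v)
   \<Rightarrow> 'i set \<Rightarrow> ('i \<Rightarrow> 'v) \<Rightarrow> 'j set \<Rightarrow> ('j \<Rightarrow> 'w) \<Rightarrow> 'i rel" where
  "conn_rel scaleV n k br I v J w = {(i, i'). connected scaleV n k br I v J w i i'}"

end

theory Submission
  imports Defs
begin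

lemma lin_vimage:
  assumes "Vector_Spaces.linear s1 s2 f" "module.subspace s2 S"
  shows "module.subspace s1 (f -` S)"
proof -
  interpret linear s1 s2 f by fact
  show ?thesis using subspace_vimage assms(2) by blast
qed

lemma list_all_gen:
  assumes VS: "vector_space s"
    and sub: "\<And>l p. length l = N \<Longrightarrow> p < N \<Longrightarrow> module.subspace s {x. P (l[p:=x])}"
    and base: "\<And>l. length l = N \<Longrightarrow> set l \<subseteq> B \<Longrightarrow> P l"
    and sp: "module.span s B = UNIV" and len: "length l = N"
  shows "P l"
proof -
  interpret vector_space s by fact
  have "\<forall>l. length l = N \<and> set (drop q l) \<subseteq> B \<longrightarrow> P l" for q
  proof (induction q)
    case 0 then show ?case using base by auto
  next
    case (Suc q)
    show ?case
    proof (intro allI impI)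
      fix l assume a: "length l = N \<and> set (drop (Suc q) l) \<subseteq> B"
      show "P l"
      proof (cases "q < N")
        case False then show ?thesis using a Suc.IH by simp
      next
        case True
        have "B \<subseteq> {x. P (l[q:=x])}"
        proof
          fix b assume b: "b \<in> B"
          have "drop q (l[q:=b]) = b # drop (Suc q) l"
            using True a by (metis Cons_nth_drop_Suc drop_update_cancel length_list_update
                lessI nth_list_update_eq)
          hence "set (drop q (l[q:=b])) \<subseteq> B" using a b by simp
          then show "b \<in> {x. P (l[q:=x])}" using Suc.IH a by simp
        qed
        hence "span B \<subseteq> {x. P (l[q:=x])}" using span_minimal sub True a by blast
        hence "l!q \<in> {x. P (l[q:=x])}" using sp by blast
        thus "P l" by simp
      qed
    qed
  qed
  from this[of N] len show ?thesis by simp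
qed

lemma A_seq_prefix:
  "m \<le> length st \<Longrightarrow> A_seq scaleV n br I v w A0 (st @ st') m = A_seq scaleV n br I v w A0 st m"
  by (induction m) (auto simp: nth_append)

theorem mainTheorem5:
  fixes scaleV :: "'f::field \<Rightarrow> 'v::ab_group_add \<Rightarrow> 'v"
    and scaleW :: "'f \<Rightarrow> 'w::ab_group_add \<Rightarrow> 'w"
    and br :: "(nat \<Rightarrow> nat) \<Rightarrow> 'v list \<Rightarrow> 'w list \<Rightarrow> 'v"
    and n k :: nat
    and I :: "'i set" and v :: "'i \<Rightarrow> 'v"
    and J :: "'j set" and w :: "'j \<Rightarrow> 'w"
  assumes "2 \<le> n" and "1 \<le> k" and "k \<le> n"
    and "is_k_module scaleV scaleW n k br"
    and "is_basis_on scaleV I v"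
    and "is_basis_on scaleW J w"
    and "multiplicative_basis scaleV n k br I v J w"
  shows "\<forall>C \<in> I // conn_rel scaleV n k br I v J w.
           is_k_submodule scaleV n k br (module.span scaleV (v ` C))"
proof
  fix C assume "C \<in> I // conn_rel scaleV n k br I v J w"
  then obtain i0 where i0: "i0 \<in> I" and Cdef: "C = {r. connected scaleV n k br I v J w i0 r}"
    unfolding quotient_def conn_rel_def by auto
  interpret V: vector_space scaleV using assms(4) unfolding is_k_module_def by blast
  interpret W: vector_space scaleW using assms(4) unfolding is_k_module_def by blast
  define S where "S = V.span (v ` C)"
  have subS: "V.subspace S" unfolding S_def by (rule V.subspace_span)
  have lin1: "Vector_Spaces.linear scaleV scaleV (\<lambda>x. br \<sigma> (xs[p := x]) ys)"
    if "\<sigma> \<in> S_n n" "length xs = k" "length ys = n - k" "p < k" for \<sigma> xs ys p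
    using assms(4) that unfolding is_k_module_def by blast
  have lin2: "Vector_Spaces.linear scaleW scaleV (\<lambda>y. br \<sigma> xs (ys[p := y]))"
    if "\<sigma> \<in> S_n n" "length xs = k" "length ys = n - k" "p < n - k" for \<sigma> xs ys p
    using assms(4) that unfolding is_k_module_def by blast
  have closure: "r \<in> C"
    if iC: "i \<in> C" and rI: "r \<in> I" and \<sigma>: "\<sigma> \<in> S_n n"
      and isI: "set is \<subseteq> I" "length is = k - 1" and jsJ: "set js \<subseteq> J" "length js = n - k"
      and ra: "r \<in> a_sig scaleV br I v w \<sigma> (i # is) js" for i r \<sigma> "is" js
  proof (cases "r = i0")
    case True then show ?thesis using Cdef i0 unfolding connected_def by auto
  next
    case False
    have ci: "connected scaleV n k br I v J w i0 i" using iC Cdef by auto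
    hence iI: "i \<in> I" unfolding connected_def by auto
    obtain st0 where
      st0a: "\<forall>(X, Y)\<in>set st0. length X = k - 1 \<and> length Y = n - k \<and>
        set X \<subseteq> Inl ` I \<union> Inr ` I \<and> set Y \<subseteq> Inl ` J \<union> Inr ` J"
      and st0b: "\<forall>m. 1 \<le> m \<and> m \<le> length st0 \<longrightarrow> A_seq scaleV n br I v w {i0} st0 m \<noteq> {}"
      and st0c: "i \<in> A_seq scaleV n br I v w {i0} st0 (length st0)"
    proof (cases "i0 = i")
      case True then show ?thesis using that[of "[]"] by simp
    next
      case False
      then obtain st where st: "is_connection scaleV n k br I v J w i0 i st"
        using ci unfolding connected_def by auto
      show ?thesis
      proof (rule that[of st])
        show "\<forall>(X, Y)\<in>set st. length X = k - 1 \<and> length Y = n - k \<and>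
          set X \<subseteq> Inl ` I \<union> Inr ` I \<and> set Y \<subseteq> Inl ` J \<union> Inr ` J"
          using st unfolding is_connection_def by blast
        show "i \<in> A_seq scaleV n br I v w {i0} st (length st)"
          using st unfolding is_connection_def by blast
        show "\<forall>m. 1 \<le> m \<and> m \<le> length st \<longrightarrow> A_seq scaleV n br I v w {i0} st m \<noteq> {}"
        proof (intro allI impI)
          fix m assume m: "1 \<le> m \<and> m \<le> length st"
          show "A_seq scaleV n br I v w {i0} st m \<noteq> {}"
          proof (cases "m = length st")
            case True then show ?thesis using \<open>i \<in> A_seq scaleV n br I v w {i0} st (length st)\<close> by auto
          next
            case False then show ?thesis using m st unfolding is_connection_def by auto
          qed
        qed
      qed
    qed
    define s where "s = (map Inl is :: ('i + 'i) list, map Inl js :: ('j + 'j) list)"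
    define st where "st = st0 @ [s]"
    have pl: "map projl (map Inl is) = is" "map projl (map Inl js) = js"
      by (simp_all add: map_idI)
    have mu: "r \<in> mu scaleV n br I v w i (fst s) (snd s)"
      using ra \<sigma> unfolding mu_def s_def by (auto simp: pl comp_def)
    have "is_connection scaleV n k br I v J w i0 r st"
      unfolding is_connection_def
    proof (intro conjI)
      show "st \<noteq> []" unfolding st_def by simp
      show "\<forall>(X, Y)\<in>set st. length X = k - 1 \<and> length Y = n - k \<and>
        set X \<subseteq> Inl ` I \<union> Inr ` I \<and> set Y \<subseteq> Inl ` J \<union> Inr ` J"
        using st0a isI jsJ unfolding st_def s_def by auto
      show "\<forall>m. 1 \<le> m \<and> m \<le> length st - 1 \<longrightarrow> A_seq scaleV n br I v w {i0} st m \<noteq> {}"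
        using st0b unfolding st_def by (simp add: A_seq_prefix)
      have "A_seq scaleV n br I v w {i0} st (length st)
          = phi scaleV n br I v w (A_seq scaleV n br I v w {i0} st0 (length st0)) (fst s) (snd s)"
        unfolding st_def by (simp add: A_seq_prefix)
      then show "r \<in> A_seq scaleV n br I v w {i0} st (length st)"
        using mu st0c unfolding phi_def by auto
    qed
    then show ?thesis using Cdef i0 rI False unfolding connected_def by auto
  qed
  have base: "br \<sigma> (v i # map v is) (map w js) \<in> S"
    if iC: "i \<in> C" and \<sigma>: "\<sigma> \<in> S_n n"
      and isI: "set is \<subseteq> I" "length is = k - 1" and jsJ: "set js \<subseteq> J" "length js = n - k"
    for i \<sigma> "is" js
  proof -
    have iI: "i \<in> I" using iC Cdef unfolding connected_def by auto
    obtain r c where rI: "r \<in> I" and eq: "br \<sigma> (map v (i # is)) (map w js) = scaleV c (v r)"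
      using assms(7) \<sigma> isI jsJ iI assms(2) unfolding multiplicative_basis_def
      by (metis (no_types, lifting) One_nat_def Suc_pred' insert_subset le_simps(3)
          length_Cons list.set(2) zero_less_one_class.zero_le_one)
    show ?thesis
    proof (cases "br \<sigma> (v i # map v is) (map w js) = 0")
      case True then show ?thesis using V.span_zero S_def by simp
    next
      case False
      hence "r \<in> a_sig scaleV br I v w \<sigma> (i # is) js"
        unfolding a_sig_def using rI eq by auto
      hence "r \<in> C" using closure iC rI \<sigma> isI jsJ by blast
      hence "scaleV c (v r) \<in> S" unfolding S_def by (simp add: V.span_base V.span_scale)
      then show ?thesis using eq by simp
    qed
  qed
  have spW: "W.span (w ` J) = UNIV" and spV: "V.span (v ` I) = UNIV"
    using assms(5,6) unfolding is_basis_on_def by auto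
  have stage1: "br \<sigma> (v i # map v is) ys \<in> S"
    if iC: "i \<in> C" and \<sigma>: "\<sigma> \<in> S_n n"
      and isI: "set is \<subseteq> I" "length is = k - 1" and ys: "length ys = n - k"
    for i \<sigma> "is" ys
  proof (rule list_all_gen[where s = scaleW and N = "n - k" and B = "w ` J"
        and P = "\<lambda>ys. br \<sigma> (v i # map v is) ys \<in> S"])
    show "vector_space scaleW" by unfold_locales
    show "W.span (w ` J) = UNIV" by (fact spW)
    show "length ys = n - k" by fact
    fix l :: "'w list" and p assume l: "length l = n - k" and p: "p < n - k"
    have "W.subspace ((\<lambda>y. br \<sigma> (v i # map v is) (l[p := y])) -` S)"
      by (rule lin_vimage[OF lin2 subS]) (use \<sigma> isI l p assms(2) in auto)
    then show "W.subspace {x. br \<sigma> (v i # map v is) (l[p := x]) \<in> S}"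
      by (simp add: vimage_def)
  next
    fix l :: "'w list" assume l: "length l = n - k" "set l \<subseteq> w ` J"
    define js where "js = map (inv_into J w) l"
    have "map w js = l" unfolding js_def using l(2)
      by (induction l) (auto simp: f_inv_into_f)
    moreover have "set js \<subseteq> J" unfolding js_def using l(2) by (auto simp: inv_into_into)
    ultimately show "br \<sigma> (v i # map v is) l \<in> S"
      using base[OF iC \<sigma> isI, of js] l(1) by auto
  qed
  have stage2: "\<forall>ys. length ys = n - k \<longrightarrow> br \<sigma> (v i # xs) ys \<in> S"
    if iC: "i \<in> C" and \<sigma>: "\<sigma> \<in> S_n n" and xs: "length xs = k - 1"
    for i \<sigma> xs
  proof (rule list_all_gen[where s = scaleV and N = "k - 1" and B = "v ` I"
        and P = "\<lambda>xs. \<forall>ys. length ys = n - k \<longrightarrow> br \<sigma> (v i # xs) ys \<in> S"])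
    show "vector_space scaleV" by unfold_locales
    show "V.span (v ` I) = UNIV" by (fact spV)
    show "length xs = k - 1" by fact
    fix l :: "'v list" and p assume l: "length l = k - 1" and p: "p < k - 1"
    have "V.subspace (\<Inter>ys\<in>{ys. length ys = n - k}. (\<lambda>x. br \<sigma> ((v i # l)[Suc p := x]) ys) -` S)"
    proof (rule V.subspace_Inter, safe)
      fix ys :: "'w list" assume "length ys = n - k"
      then show "V.subspace ((\<lambda>x. br \<sigma> ((v i # l)[Suc p := x]) ys) -` S)"
        by (intro lin_vimage[OF lin1 subS]) (use \<sigma> l p assms(2) in auto)
    qed
    moreover have "(\<Inter>ys\<in>{ys. length ys = n - k}. (\<lambda>x. br \<sigma> ((v i # l)[Suc p := x]) ys) -` S)
      = {x. \<forall>ys. length ys = n - k \<longrightarrow> br \<sigma> (v i # l[p := x]) ys \<in> S}" by auto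
    ultimately show "V.subspace {x. \<forall>ys. length ys = n - k \<longrightarrow> br \<sigma> (v i # l[p := x]) ys \<in> S}"
      by simp
  next
    fix l :: "'v list" assume l: "length l = k - 1" "set l \<subseteq> v ` I"
    define iis where "iis = map (inv_into I v) l"
    have "map v iis = l" unfolding iis_def using l(2)
      by (induction l) (auto simp: f_inv_into_f)
    moreover have "set iis \<subseteq> I" unfolding iis_def using l(2) by (auto simp: inv_into_into)
    ultimately show "\<forall>ys. length ys = n - k \<longrightarrow> br \<sigma> (v i # l) ys \<in> S"
      using stage1[OF iC \<sigma>, of iis] l(1) by auto
  qed
  have stage3: "S \<subseteq> {u. \<forall>xs ys. length xs = k - 1 \<and> length ys = n - k \<longrightarrow> br \<sigma> (u # xs) ys \<in> S}"
    if \<sigma>: "\<sigma> \<in> S_n n" for \<sigma>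
  proof (subst (1) S_def, rule V.span_minimal)
    show "v ` C \<subseteq> {u. \<forall>xs ys. length xs = k - 1 \<and> length ys = n - k \<longrightarrow> br \<sigma> (u # xs) ys \<in> S}"
      using stage2 \<sigma> by auto
    have "V.subspace (\<Inter>p\<in>{p. length (fst p) = k - 1 \<and> length (snd p) = n - k}.
        (\<lambda>x. br \<sigma> ((undefined # fst p)[0 := x]) (snd p)) -` S)"
    proof (rule V.subspace_Inter, safe)
      fix xs :: "'v list" and ys :: "'w list" assume "length (fst (xs, ys)) = k - 1" "length (snd (xs, ys)) = n - k"
      then show "V.subspace ((\<lambda>x. br \<sigma> ((undefined # fst (xs, ys))[0 := x]) (snd (xs, ys))) -` S)"
        by (intro lin_vimage[OF lin1 subS]) (use \<sigma> assms(2) in auto)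
    qed
    moreover have "(\<Inter>p\<in>{p. length (fst p) = k - 1 \<and> length (snd p) = n - k}.
        (\<lambda>x. br \<sigma> ((undefined # fst p)[0 := x]) (snd p)) -` S)
      = {u. \<forall>xs ys. length xs = k - 1 \<and> length ys = n - k \<longrightarrow> br \<sigma> (u # xs) ys \<in> S}" by auto
    ultimately show "V.subspace {u. \<forall>xs ys. length xs = k - 1 \<and> length ys = n - k \<longrightarrow> br \<sigma> (u # xs) ys \<in> S}"
      by simp
  qed
  show "is_k_submodule scaleV n k br (module.span scaleV (v ` C))"
    unfolding is_k_submodule_def
    using subS stage3 unfolding S_def by blast
qed

end
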